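(* Let $|\psi\rangle$ be a pure state of a multi-qudit system and $|c_\psi|=\max_{|\phi\rangle}|\langle\psi|\phi\rangle|$, the maximum over pure stabilizer states $|\phi\rangle$ of the same system. For all $\alpha\in(0,1)\cup(1,\infty)$ and $\beta\in(-\infty,0)\cup(0,\infty)$, $$M_{\alpha,\beta}(|\psi\rangle\langle\psi|)=\frac{1}{(1-\alpha)\beta}\left\{\left[\Big(\frac{1+|c_\psi|}{2}\Big)^{\alpha}+\Big(\frac{1-|c_\psi|}{2}\Big)^{\alpha}\right]^{\beta}-1\right\}.$$
   Context: Stabilizer formalism: for a qudit $\mathbb C^d$ with basis $\{|j\rangle\}_{j\in\mathbb Z_d}$, let $X|j\rangle=|j+1\bmod d\rangle$, $Z|j\rangle=\omega^j|j\rangle$, $\omega=e^{2\pi i/d}$, $T_u=\tau^{-u_1u_2}Z^{u_1}X^{u_2}$, $\tau=e^{(d+1)\pi i/d}$; on $n$ qudits Heisenberg–Weyl operators are tensor products of these. Clifford unitaries $V$ satisfy: for every $T_u$ there are $u',\theta$ with $VT_uV^\dagger=e^{i\theta}T_{u'}$. Pure stabilizer states are $V|0\cdots0\rangle$, $V$ Clifford. For $\alpha\in(0,1)\cup(1,\infty)$, $\beta\in(-\infty,0)\cup(0,\infty)$: $S_{\alpha,\beta}(\rho)=\frac{1}{(1-\alpha)\beta}[(\mathrm{Tr}\rho^\alpha)^\beta-1]$, $J_{\alpha,\beta}(\rho,\sigma)=S_{\alpha,\beta}(\tfrac{\rho+\sigma}{2})-\tfrac12S_{\alpha,\beta}(\rho)-\tfrac12S_{\alpha,\beta}(\sigma)$,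 and for a pure state $M_{\alpha,\beta}(|\psi\rangle\langle\psi|)=\min_{|\phi\rangle}J_{\alpha,\beta}(|\psi\rangle\langle\psi|,|\phi\rangle\langle\phi|)$, minimum over pure stabilizer states $|\phi\rangle$ of the same system. *)

theory Defs
  imports "HOL-Analysis.Analysis"
begin

text \<open>Vectors are functions nat list => complex (only values on the basis matter);
  operators are matrices nat list => nat list => complex, entry (j,k) = <j|A|k>.\<close>

definition qbasis :: "nat \<Rightarrow> nat \<Rightarrow> nat list set" where
  "qbasis n d = {j. length j = n \<and> (\<forall>x\<in>set j. x < d)}"

definition omega :: "nat \<Rightarrow> complex" where
  "omega d = cis (2 * pi / real d)"

definition tau :: "nat \<Rightarrow> complex" where
  "tau d = cis ((real d + 1) * pi / real d)"

text \<open>Single-qudit Heisenberg-Weyl operator T_u = tau^(-u1 u2) Z^u1 X^u2, u = (u1,u2) in Z_d^2.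
  Since Z^u1 X^u2 |k> = omega^(u1 (k+u2)) |k+u2 mod d>, its (j,k) entry is as below.\<close>

definition hw1 :: "nat \<Rightarrow> nat \<times> nat \<Rightarrow> nat \<Rightarrow> nat \<Rightarrow> complex" where
  "hw1 d u j k = (if j = (k + snd u) mod d
                  then inverse (tau d ^ (fst u * snd u)) * omega d ^ (fst u * j) else 0)"

definition hw_index :: "nat \<Rightarrow> nat \<Rightarrow> (nat \<times> nat) list set" where
  "hw_index n d = {u. length u = n \<and> (\<forall>p\<in>set u. fst p < d \<and> snd p < d)}"

definition hw :: "nat \<Rightarrow> (nat \<times> nat) list \<Rightarrow> nat list \<Rightarrow> nat list \<Rightarrow> complex" where
  "hw d u j k = (\<Prod>i<length u. hw1 d (u ! i) (j ! i) (k ! i))"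

definition mmul :: "nat \<Rightarrow> nat \<Rightarrow> (nat list \<Rightarrow> nat list \<Rightarrow> complex) \<Rightarrow>
    (nat list \<Rightarrow> nat list \<Rightarrow> complex) \<Rightarrow> nat list \<Rightarrow> nat list \<Rightarrow> complex" where
  "mmul n d A B j k = (\<Sum>l\<in>qbasis n d. A j l * B l k)"

definition adj :: "(nat list \<Rightarrow> nat list \<Rightarrow> complex) \<Rightarrow> nat list \<Rightarrow> nat list \<Rightarrow> complex" where
  "adj A j k = cnj (A k j)"

definition idop :: "nat list \<Rightarrow> nat list \<Rightarrow> complex" where
  "idop j k = (if j = k then 1 else 0)"

definition unitary_op :: "nat \<Rightarrow> nat \<Rightarrow> (nat list \<Rightarrow> nat list \<Rightarrow> complex) \<Rightarrow> bool" where
  "unitary_op n d V \<longleftrightarrow>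
     (\<forall>j\<in>qbasis n d. \<forall>k\<in>qbasis n d.
        mmul n d V (adj V) j k = idop j k \<and> mmul n d (adj V) V j k = idop j k)"

definition clifford :: "nat \<Rightarrow> nat \<Rightarrow> (nat list \<Rightarrow> nat list \<Rightarrow> complex) \<Rightarrow> bool" where
  "clifford n d V \<longleftrightarrow> unitary_op n d V \<and>
     (\<forall>u\<in>hw_index n d. \<exists>u'\<in>hw_index n d. \<exists>\<theta>::real.
        \<forall>j\<in>qbasis n d. \<forall>k\<in>qbasis n d.
          mmul n d (mmul n d V (hw d u)) (adj V) j k = cis \<theta> * hw d u' j k)"

definition stab_states :: "nat \<Rightarrow> nat \<Rightarrow> (nat list \<Rightarrow> complex) set" where
  "stab_states n d = {(\<lambda>j. V j (replicate n 0)) | V. clifford n d V}"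

definition inner :: "nat \<Rightarrow> nat \<Rightarrow> (nat list \<Rightarrow> complex) \<Rightarrow> (nat list \<Rightarrow> complex) \<Rightarrow> complex" where
  "inner n d \<psi> \<phi> = (\<Sum>j\<in>qbasis n d. cnj (\<psi> j) * \<phi> j)"

definition proj :: "(nat list \<Rightarrow> complex) \<Rightarrow> nat list \<Rightarrow> nat list \<Rightarrow> complex" where
  "proj \<psi> j k = \<psi> j * cnj (\<psi> k)"

definition spectral_decomp :: "nat \<Rightarrow> nat \<Rightarrow> (nat list \<Rightarrow> nat list \<Rightarrow> complex) \<Rightarrow>
    (nat list \<Rightarrow> nat list \<Rightarrow> complex) \<Rightarrow> (nat list \<Rightarrow> real) \<Rightarrow> bool" where
  "spectral_decomp n d \<rho> e lam \<longleftrightarrow>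
     (\<forall>i\<in>qbasis n d. \<forall>i'\<in>qbasis n d. inner n d (e i) (e i') = (if i = i' then 1 else 0)) \<and>
     (\<forall>j\<in>qbasis n d. \<forall>k\<in>qbasis n d.
        \<rho> j k = (\<Sum>i\<in>qbasis n d. complex_of_real (lam i) * e i j * cnj (e i k)))"

text \<open>Tr rho^alpha for a positive semidefinite rho: sum of lambda_i^alpha over its eigenvalues
  (with multiplicity); independent of the chosen spectral decomposition.\<close>

definition tr_pow :: "nat \<Rightarrow> nat \<Rightarrow> real \<Rightarrow> (nat list \<Rightarrow> nat list \<Rightarrow> complex) \<Rightarrow> real" where
  "tr_pow n d \<alpha> \<rho> =
     (SOME s. \<exists>e lam. spectral_decomp n d \<rho> e lam \<and> s = (\<Sum>i\<in>qbasis n d. lam i powr \<alpha>))"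

definition S_ab :: "nat \<Rightarrow> nat \<Rightarrow> real \<Rightarrow> real \<Rightarrow> (nat list \<Rightarrow> nat list \<Rightarrow> complex) \<Rightarrow> real" where
  "S_ab n d \<alpha> \<beta> \<rho> = (1 / ((1 - \<alpha>) * \<beta>)) * ((tr_pow n d \<alpha> \<rho>) powr \<beta> - 1)"

definition J_ab :: "nat \<Rightarrow> nat \<Rightarrow> real \<Rightarrow> real \<Rightarrow> (nat list \<Rightarrow> nat list \<Rightarrow> complex) \<Rightarrow>
    (nat list \<Rightarrow> nat list \<Rightarrow> complex) \<Rightarrow> real" where
  "J_ab n d \<alpha> \<beta> \<rho> \<sigma> = S_ab n d \<alpha> \<beta> (\<lambda>j k. (\<rho> j k + \<sigma> j k) / 2)
      - S_ab n d \<alpha> \<beta> \<rho> / 2 - S_ab n d \<alpha> \<beta> \<sigma> / 2"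

text \<open>M_{alpha,beta}(|psi><psi|) = min over pure stabilizer states (written as Inf; the
  minimum is attained).\<close>

definition M_ab :: "nat \<Rightarrow> nat \<Rightarrow> real \<Rightarrow> real \<Rightarrow> (nat list \<Rightarrow> complex) \<Rightarrow> real" where
  "M_ab n d \<alpha> \<beta> \<psi> = (INF \<phi>\<in>stab_states n d. J_ab n d \<alpha> \<beta> (proj \<psi>) (proj \<phi>))"

definition c_abs :: "nat \<Rightarrow> nat \<Rightarrow> (nat list \<Rightarrow> complex) \<Rightarrow> real" where
  "c_abs n d \<psi> = (SUP \<phi>\<in>stab_states n d. cmod (inner n d \<psi> \<phi>))"

end

theory Submission
  imports Defs "HOL-Analysis.Analysis"
begin


lemma finite_qbasis: "finite (qbasis n d)"
proof -
  have "qbasis n d \<subseteq> {xs. set xs \<subseteq> {0..<d} \<and> length xs = n}"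
    unfolding qbasis_def by auto
  moreover have "finite {xs. set xs \<subseteq> {0..<d} \<and> length xs = n}"
    by (rule finite_lists_length_eq) simp
  ultimately show ?thesis by (rule finite_subset)
qed

lemma sum_idop_left: "j \<in> qbasis n d \<Longrightarrow> (\<Sum>l\<in>qbasis n d. idop j l * f l) = f j"
proof -
  assume j: "j \<in> qbasis n d"
  have "(\<Sum>l\<in>qbasis n d. idop j l * f l) = (\<Sum>l\<in>qbasis n d. if j = l then f l else 0)"
    by (rule sum.cong) (auto simp: idop_def)
  then show ?thesis using j finite_qbasis by simp
qed

lemma sum_idop_right: "j \<in> qbasis n d \<Longrightarrow> (\<Sum>l\<in>qbasis n d. f l * idop l j) = f j"
proof -
  assume j: "j \<in> qbasis n d"
  have "(\<Sum>l\<in>qbasis n d. f l * idop l j) = (\<Sum>l\<in>qbasis n d. if j = l then f l else 0)"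
    by (rule sum.cong) (auto simp: idop_def)
  then show ?thesis using j finite_qbasis by simp
qed

lemma inner_add_left: "inner n d (\<lambda>j. x j + y j) z = inner n d x z + inner n d y z"
  unfolding inner_def by (simp add: algebra_simps sum.distrib)
lemma inner_add_right: "inner n d z (\<lambda>j. x j + y j) = inner n d z x + inner n d z y"
  unfolding inner_def by (simp add: algebra_simps sum.distrib)
lemma inner_diff_left: "inner n d (\<lambda>j. x j - y j) z = inner n d x z - inner n d y z"
  unfolding inner_def by (simp add: algebra_simps sum_subtractf)
lemma inner_diff_right: "inner n d z (\<lambda>j. x j - y j) = inner n d z x - inner n d z y"
  unfolding inner_def by (simp add: algebra_simps sum_subtractf)
lemma inner_scale_left: "inner n d (\<lambda>j. t * x j) z = cnj t * inner n d x z"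
  unfolding inner_def by (simp add: algebra_simps sum_distrib_left)
lemma inner_scale_right: "inner n d z (\<lambda>j. t * x j) = t * inner n d z x"
  unfolding inner_def by (simp add: algebra_simps sum_distrib_left)
lemma inner_cnj: "inner n d y x = cnj (inner n d x y)"
  unfolding inner_def by (simp add: mult.commute)
lemma inner_cong: "(\<And>j. j \<in> qbasis n d \<Longrightarrow> x j = x' j) \<Longrightarrow> (\<And>j. j \<in> qbasis n d \<Longrightarrow> y j = y' j)
   \<Longrightarrow> inner n d x y = inner n d x' y'"
  unfolding inner_def by (rule sum.cong) auto

lemma inner_self_real: "inner n d x x = of_real (\<Sum>j\<in>qbasis n d. (cmod (x j))^2)"
  unfolding inner_def of_real_sum
  by (intro sum.cong refl) (metis complex_norm_square mult.commute)

lemma inner_self_nonneg: "Re (inner n d x x) \<ge> 0" "Im (inner n d x x) = 0"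
  unfolding inner_self_real by (auto intro: sum_nonneg)

lemma inner_self_zero: "inner n d x x = 0 \<Longrightarrow> j \<in> qbasis n d \<Longrightarrow> x j = 0"
proof -
  assume a: "inner n d x x = 0" "j \<in> qbasis n d"
  then have "(\<Sum>j\<in>qbasis n d. (cmod (x j))^2) = 0" unfolding inner_self_real by (metis of_real_eq_0_iff)
  with a(2) finite_qbasis have "(cmod (x j))^2 = 0" by (subst (asm) sum_nonneg_eq_0_iff) auto
  then show ?thesis by simp
qed

definition app :: "nat \<Rightarrow> nat \<Rightarrow> (nat list \<Rightarrow> nat list \<Rightarrow> complex) \<Rightarrow> (nat list \<Rightarrow> complex) \<Rightarrow> nat list \<Rightarrow> complex"
  where "app n d H x j = (\<Sum>l\<in>qbasis n d. H j l * x l)"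

definition herm :: "nat \<Rightarrow> nat \<Rightarrow> (nat list \<Rightarrow> nat list \<Rightarrow> complex) \<Rightarrow> bool"
  where "herm n d H \<longleftrightarrow> (\<forall>j\<in>qbasis n d. \<forall>k\<in>qbasis n d. H j k = cnj (H k j))"

definition invol :: "nat \<Rightarrow> nat \<Rightarrow> (nat list \<Rightarrow> nat list \<Rightarrow> complex) \<Rightarrow> bool"
  where "invol n d H \<longleftrightarrow> (\<forall>j\<in>qbasis n d. \<forall>k\<in>qbasis n d. (\<Sum>l\<in>qbasis n d. H j l * H l k) = idop j k)"

lemma app_app: assumes "invol n d H" "j \<in> qbasis n d"
  shows "app n d H (app n d H x) j = x j"
proof -
  have "app n d H (app n d H x) j = (\<Sum>l\<in>qbasis n d. \<Sum>m\<in>qbasis n d. H j l * H l m * x m)"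
    unfolding app_def by (simp add: sum_distrib_left mult.assoc)
  also have "\<dots> = (\<Sum>m\<in>qbasis n d. (\<Sum>l\<in>qbasis n d. H j l * H l m) * x m)"
    by (subst sum.swap) (simp add: sum_distrib_right)
  also have "\<dots> = (\<Sum>m\<in>qbasis n d. idop j m * x m)"
    using assms unfolding invol_def by (intro sum.cong) auto
  also have "\<dots> = x j" using assms(2) by (rule sum_idop_left)
  finally show ?thesis .
qed

lemma inner_app: assumes "herm n d H"
  shows "inner n d (app n d H x) y = inner n d x (app n d H y)"
proof -
  have "inner n d (app n d H x) y = (\<Sum>j\<in>qbasis n d. \<Sum>l\<in>qbasis n d. cnj (H j l) * cnj (x l) * y j)"
    unfolding inner_def app_def by (simp add: sum_distrib_right mult.assoc)
  also have "\<dots> = (\<Sum>l\<in>qbasis n d. \<Sum>j\<in>qbasis n d. cnj (x l) * (H l j * y j))"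
    apply (subst sum.swap) apply (intro sum.cong refl)
    using assms unfolding herm_def by (metis complex_cnj_cnj mult.commute mult.left_commute)
  also have "\<dots> = inner n d x (app n d H y)"
    unfolding inner_def app_def by (simp add: sum_distrib_left)
  finally show ?thesis .
qed

lemma inner_app_app: assumes "herm n d H" "invol n d H"
  shows "inner n d (app n d H x) (app n d H y) = inner n d x y"
  using assms by (simp add: inner_app app_app cong: inner_cong)



lemma inner_delta_left: "a \<in> qbasis n d \<Longrightarrow> inner n d (\<lambda>j. idop j a) x = x a"
proof -
  assume a: "a \<in> qbasis n d"
  have "inner n d (\<lambda>j. idop j a) x = (\<Sum>j\<in>qbasis n d. if a = j then x j else 0)"
    unfolding inner_def by (rule sum.cong) (auto simp: idop_def)
  then show ?thesis using a finite_qbasis by simp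
qed

lemma inner_delta_right: "a \<in> qbasis n d \<Longrightarrow> inner n d x (\<lambda>j. idop j a) = cnj (x a)"
  by (subst inner_cnj) (simp add: inner_delta_left)

lemma householder:
  assumes a: "a \<in> qbasis n d" and y: "inner n d y y = 1"
  shows "\<exists>H \<zeta>. herm n d H \<and> invol n d H \<and> cmod \<zeta> = 1 \<and> (\<forall>j\<in>qbasis n d. H j a = \<zeta> * y j)
     \<and> (\<forall>c\<in>qbasis n d. c \<noteq> a \<and> y c = 0 \<longrightarrow> (\<forall>j\<in>qbasis n d. H j c = idop j c))"
proof -
  define \<gamma> where "\<gamma> = (if y a = 0 then 1 else y a / of_real (cmod (y a)))"
  define \<zeta> where "\<zeta> = cnj \<gamma>"
  have \<zeta>1: "cmod \<zeta> = 1" unfolding \<zeta>_def \<gamma>_def by (simp add: norm_divide)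
  have \<zeta>ya: "\<zeta> * y a = of_real (cmod (y a))"
  proof (cases "y a = 0")
    case False
    then show ?thesis unfolding \<zeta>_def \<gamma>_def
      by (simp add: field_simps complex_norm_square[symmetric] power2_eq_square mult.commute)
  qed (simp add: \<zeta>_def \<gamma>_def)
  define v where "v = (\<lambda>j. idop j a - \<zeta> * y j)"
  define s where "s = inner n d v v"
  have s: "s = 2 - 2 * of_real (cmod (y a))"
  proof -
    have "s = inner n d (\<lambda>j. idop j a) (\<lambda>j. idop j a) - inner n d (\<lambda>j. idop j a) (\<lambda>j. \<zeta> * y j)
       - (inner n d (\<lambda>j. \<zeta> * y j) (\<lambda>j. idop j a) - inner n d (\<lambda>j. \<zeta> * y j) (\<lambda>j. \<zeta> * y j))"
      unfolding s_def v_def inner_diff_left inner_diff_right by simp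
    also have "\<dots> = 1 - \<zeta> * y a - (cnj (\<zeta> * y a) - cnj \<zeta> * \<zeta>)"
      using a y by (simp add: inner_delta_left inner_delta_right inner_scale_left inner_scale_right, simp add: idop_def)
    also have "cnj \<zeta> * \<zeta> = 1" using \<zeta>1 by (metis complex_norm_square mult.commute of_real_1 power_one)
    finally show ?thesis unfolding \<zeta>ya by simp
  qed
  show ?thesis
  proof (cases "s = 0")
    case True
    have v0: "v j = 0" if "j \<in> qbasis n d" for j using inner_self_zero[of n d v j] True that s_def by simp
    show ?thesis
    proof (intro exI conjI)
      show "herm n d idop" unfolding herm_def idop_def by auto
      show "invol n d idop" unfolding invol_def by (auto simp: sum_idop_left)
      show "cmod \<zeta> = 1" by (rule \<zeta>1)
      show "\<forall>j\<in>qbasis n d. idop j a = \<zeta> * y j" using v0 unfolding v_def by auto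
      show "\<forall>c\<in>qbasis n d. c \<noteq> a \<and> y c = 0 \<longrightarrow> (\<forall>j\<in>qbasis n d. idop j c = idop j c)" by simp
    qed
  next
    case False
    define H where "H = (\<lambda>j k. idop j k - 2 * v j * cnj (v k) / s)"
    have cs: "cnj s = s" unfolding s by simp
    have vv: "(\<Sum>l\<in>qbasis n d. cnj (v l) * v l) = s" unfolding s_def inner_def ..
    show ?thesis
    proof (intro exI conjI)
      show "herm n d H" unfolding herm_def H_def using cs
        by (auto simp: idop_def mult.commute)
      show "invol n d H" unfolding invol_def
      proof (intro ballI)
        fix j k assume j: "j \<in> qbasis n d" and k: "k \<in> qbasis n d"
        have e: "H j l * H l k = idop j l * idop l k - idop j l * (2 * v l * cnj (v k) / s)
           - (2 * v j * cnj (v l) / s) * idop l k + (4 * v j * cnj (v k) / s^2) * (cnj (v l) * v l)" for l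
          unfolding H_def using False by (simp add: field_simps power2_eq_square)
        have "(\<Sum>l\<in>qbasis n d. H j l * H l k) = idop j k - 2 * v j * cnj (v k) / s
            - 2 * v j * cnj (v k) / s + (4 * v j * cnj (v k) / s^2) * s"
        proof -
          have s1: "(\<Sum>l\<in>qbasis n d. idop j l * (2 * v l * cnj (v k) / s)) = 2 * v j * cnj (v k) / s"
            by (rule sum_idop_left[OF j])
          have s2: "(\<Sum>l\<in>qbasis n d. (2 * v j * cnj (v l) / s) * idop l k) = 2 * v j * cnj (v k) / s"
            by (rule sum_idop_right[OF k])
          have s0: "(\<Sum>l\<in>qbasis n d. idop j l * idop l k) = idop j k" by (rule sum_idop_left[OF j])
          show ?thesis unfolding e sum.distrib sum_subtractf sum_distrib_left[symmetric] vv s1 s2 s0 ..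
        qed
        also have "\<dots> = idop j k" using False by (simp add: field_simps power2_eq_square)
        finally show "(\<Sum>l\<in>qbasis n d. H j l * H l k) = idop j k" .
      qed
      show "cmod \<zeta> = 1" by (rule \<zeta>1)
      show "\<forall>j\<in>qbasis n d. H j a = \<zeta> * y j"
      proof
        fix j assume j: "j \<in> qbasis n d"
        have va: "cnj (v a) = 1 - of_real (cmod (y a))" unfolding v_def \<zeta>ya by (simp add: idop_def)
        have "2 * cnj (v a) / s = 1" unfolding va using False unfolding s by (simp add: field_simps)
        then have "H j a = idop j a - v j" unfolding H_def
          by (metis mult.assoc mult.commute mult_1 times_divide_eq_right)
        then show "H j a = \<zeta> * y j" unfolding v_def by simp
      qed
      show "\<forall>c\<in>qbasis n d. c \<noteq> a \<and> y c = 0 \<longrightarrow> (\<forall>j\<in>qbasis n d. H j c = idop j c)"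
        unfolding H_def v_def by (auto simp: idop_def)
    qed
  qed
qed



definition orthonormal :: "nat \<Rightarrow> nat \<Rightarrow> (nat list \<Rightarrow> nat list \<Rightarrow> complex) \<Rightarrow> bool" where
  "orthonormal n d e \<longleftrightarrow> (\<forall>i\<in>qbasis n d. \<forall>i'\<in>qbasis n d. inner n d (e i) (e i') = (if i = i' then 1 else 0))"

lemma cols_orthonormal: assumes "herm n d H" "invol n d H"
  shows "orthonormal n d (\<lambda>i j. H j i)"
  unfolding orthonormal_def
proof (intro ballI)
  fix i i' assume i: "i \<in> qbasis n d" and i': "i' \<in> qbasis n d"
  have "inner n d (\<lambda>j. H j i) (\<lambda>j. H j i') = (\<Sum>j\<in>qbasis n d. H i j * H j i')"
    unfolding inner_def
  proof (intro sum.cong refl)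
    fix j assume j: "j \<in> qbasis n d"
    have "H i j = cnj (H j i)" using assms(1) i j unfolding herm_def by blast
    then show "cnj (H j i) * H j i' = H i j * H j i'" by simp
  qed
  also have "\<dots> = idop i i'" using assms(2) i i' unfolding invol_def by auto
  finally show "inner n d (\<lambda>j. H j i) (\<lambda>j. H j i') = (if i = i' then 1 else 0)" by (simp add: idop_def)
qed

lemma onb1:
  assumes a: "a \<in> qbasis n d" and u: "inner n d u u = 1"
  shows "\<exists>e \<zeta>. orthonormal n d e \<and> cmod \<zeta> = 1 \<and> (\<forall>j\<in>qbasis n d. e a j = \<zeta> * u j)"
proof -
  obtain H \<zeta> where H: "herm n d H" "invol n d H" "cmod \<zeta> = 1" "\<forall>j\<in>qbasis n d. H j a = \<zeta> * u j"
    using householder[OF a u] by blast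
  show ?thesis
    apply (rule exI[of _ "\<lambda>i j. H j i"], rule exI[of _ \<zeta>])
    using cols_orthonormal[OF H(1,2)] H(3,4) by simp
qed

lemma onb2:
  assumes a: "a \<in> qbasis n d" and b: "b \<in> qbasis n d" and ab: "a \<noteq> b"
    and u: "inner n d u u = 1" and w: "inner n d w w = 1" and uw: "inner n d u w = 0"
  shows "\<exists>e \<zeta>1 \<zeta>2. orthonormal n d e \<and> cmod \<zeta>1 = 1 \<and> cmod \<zeta>2 = 1
     \<and> (\<forall>j\<in>qbasis n d. e a j = \<zeta>1 * u j) \<and> (\<forall>j\<in>qbasis n d. e b j = \<zeta>2 * w j)"
proof -
  obtain H1 \<zeta>1 where H1: "herm n d H1" "invol n d H1" "cmod \<zeta>1 = 1" "\<forall>j\<in>qbasis n d. H1 j a = \<zeta>1 * u j"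
    using householder[OF a u] by blast
  define w' where "w' = app n d H1 w"
  have w': "inner n d w' w' = 1" unfolding w'_def inner_app_app[OF H1(1,2)] by (rule w)
  have w'a: "w' a = 0"
  proof -
    have "w' a = (\<Sum>l\<in>qbasis n d. cnj (\<zeta>1 * u l) * w l)"
      unfolding w'_def app_def
    proof (intro sum.cong refl)
      fix l assume l: "l \<in> qbasis n d"
      have "H1 a l = cnj (H1 l a)" using H1(1) a l unfolding herm_def by blast
      also have "\<dots> = cnj (\<zeta>1 * u l)" using H1(4) l by simp
      finally show "H1 a l * w l = cnj (\<zeta>1 * u l) * w l" by simp
    qed
    also have "\<dots> = cnj \<zeta>1 * inner n d u w" unfolding inner_def by (simp add: sum_distrib_left mult.assoc)
    finally show ?thesis using uw by simp
  qed
  obtain H2 \<zeta>2 where H2: "herm n d H2" "invol n d H2" "cmod \<zeta>2 = 1" "\<forall>j\<in>qbasis n d. H2 j b = \<zeta>2 * w' j"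
    "\<forall>c\<in>qbasis n d. c \<noteq> b \<and> w' c = 0 \<longrightarrow> (\<forall>j\<in>qbasis n d. H2 j c = idop j c)"
    using householder[OF b w'] by blast
  define e where "e = (\<lambda>i. app n d H1 (\<lambda>j. H2 j i))"
  have on: "orthonormal n d e"
    using cols_orthonormal[OF H2(1,2)] unfolding orthonormal_def e_def inner_app_app[OF H1(1,2)] .
  have ea: "e a j = \<zeta>1 * u j" if j: "j \<in> qbasis n d" for j
  proof -
    have "e a j = (\<Sum>l\<in>qbasis n d. H1 j l * idop l a)"
      unfolding e_def app_def
    proof (intro sum.cong refl)
      fix l assume l: "l \<in> qbasis n d"
      show "H1 j l * H2 l a = H1 j l * idop l a" using H2(5) a ab w'a l by simp
    qed
    also have "\<dots> = H1 j a" by (rule sum_idop_right[OF a])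
    finally show ?thesis using H1(4) j by simp
  qed
  have eb: "e b j = \<zeta>2 * w j" if j: "j \<in> qbasis n d" for j
  proof -
    have "e b j = (\<Sum>l\<in>qbasis n d. H1 j l * (\<zeta>2 * w' l))"
      unfolding e_def app_def using H2(4) by (intro sum.cong) simp_all
    also have "\<dots> = \<zeta>2 * app n d H1 w' j" unfolding app_def by (simp add: sum_distrib_left algebra_simps)
    also have "app n d H1 w' j = w j" unfolding w'_def using app_app[OF H1(2) j] .
    finally show ?thesis .
  qed
  show ?thesis
    apply (rule exI[of _ e], rule exI[of _ \<zeta>1], rule exI[of _ \<zeta>2])
    apply (intro conjI ballI)
    apply (rule on)
    apply (rule H1(3))
    apply (rule H2(3))
    apply (erule ea)
    apply (erule eb)
    done
qed



definition tph :: "complex \<Rightarrow> complex" where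
  "tph g = (if g = 0 then 1 else cnj g / of_real (cmod g))"

definition rho2 :: "(nat list \<Rightarrow> complex) \<Rightarrow> (nat list \<Rightarrow> complex) \<Rightarrow> nat list \<Rightarrow> nat list \<Rightarrow> complex" where
  "rho2 \<psi> \<phi> = (\<lambda>j k. (proj \<psi> j k + proj \<phi> j k) / 2)"

lemma tph: "tph g * g = of_real (cmod g)" "cnj (tph g) * tph g = 1"
proof -
  show "tph g * g = of_real (cmod g)"
    by (cases "g = 0") (simp_all add: tph_def field_simps complex_norm_square[symmetric] power2_eq_square)
  show "cnj (tph g) * tph g = 1"
    by (cases "g = 0") (simp_all add: tph_def field_simps complex_norm_square[symmetric] power2_eq_square mult.commute)
qed

lemma twostate:
  fixes \<psi> \<phi> :: "nat list \<Rightarrow> complex"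
  assumes \<psi>: "inner n d \<psi> \<psi> = 1" and \<phi>: "inner n d \<phi> \<phi> = 1"
  defines "c \<equiv> cmod (inner n d \<psi> \<phi>)"
  defines "t \<equiv> tph (inner n d \<psi> \<phi>)"
  defines "p \<equiv> (\<lambda>j. \<psi> j + t * \<phi> j)"
  defines "m \<equiv> (\<lambda>j. \<psi> j - t * \<phi> j)"
  shows "inner n d p p = 2 + 2 * of_real c" "inner n d m m = 2 - 2 * of_real c"
    "inner n d p m = 0" "inner n d m p = 0" "c \<le> 1"
    "rho2 \<psi> \<phi> j k = (p j * cnj (p k) + m j * cnj (m k)) / 4"
proof -
  have tg: "t * inner n d \<psi> \<phi> = of_real c" unfolding t_def c_def by (rule tph(1))
  have tt: "cnj t * t = 1" unfolding t_def by (rule tph(2))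
  have gt: "cnj t * inner n d \<phi> \<psi> = of_real c"
    using arg_cong[OF tg, of cnj] by (simp add: inner_cnj[of n d \<phi> \<psi>])
  show pp: "inner n d p p = 2 + 2 * of_real c"
    unfolding p_def inner_add_left inner_add_right inner_scale_left inner_scale_right
    using \<psi> \<phi> tg tt gt by (simp add: algebra_simps)
  show mm: "inner n d m m = 2 - 2 * of_real c"
    unfolding m_def inner_diff_left inner_diff_right inner_scale_left inner_scale_right
    using \<psi> \<phi> tg tt gt by (simp add: algebra_simps)
  show "inner n d p m = 0"
    unfolding p_def m_def inner_add_left inner_diff_right inner_scale_left inner_scale_right
    using \<psi> \<phi> tg tt gt by (simp add: algebra_simps)
  show "inner n d m p = 0"
    unfolding p_def m_def inner_diff_left inner_add_right inner_scale_left inner_scale_right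
    using \<psi> \<phi> tg tt gt by (simp add: algebra_simps)
  have "0 \<le> Re (inner n d m m)" by (rule inner_self_nonneg)
  then show "c \<le> 1" unfolding mm by simp
  have tt': "t * cnj t = 1" using tt by (simp add: mult.commute)
  show "rho2 \<psi> \<phi> j k = (p j * cnj (p k) + m j * cnj (m k)) / 4"
    unfolding rho2_def proj_def p_def m_def
    by (simp add: algebra_simps) (simp add: mult.assoc[symmetric] mult.commute[of _ t] tt' mult.left_commute[of _ t]
        mult.assoc)
qed



lemma sum_two:
  assumes "a \<in> qbasis n d" "b \<in> qbasis n d" "a \<noteq> b" "\<And>i. i \<in> qbasis n d \<Longrightarrow> i \<noteq> a \<Longrightarrow> i \<noteq> b \<Longrightarrow> f i = 0"
  shows "(\<Sum>i\<in>qbasis n d. f i) = f a + (f b :: complex)"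
proof -
  have "(\<Sum>i\<in>qbasis n d. f i) = (\<Sum>i\<in>{a,b}. f i)"
    using assms finite_qbasis by (intro sum.mono_neutral_right) auto
  then show ?thesis using assms(3) by simp
qed

lemma sum_one:
  assumes "a \<in> qbasis n d" "\<And>i. i \<in> qbasis n d \<Longrightarrow> i \<noteq> a \<Longrightarrow> f i = 0"
  shows "(\<Sum>i\<in>qbasis n d. f i) = (f a :: complex)"
proof -
  have "(\<Sum>i\<in>qbasis n d. f i) = (\<Sum>i\<in>{a}. f i)"
    using assms finite_qbasis by (intro sum.mono_neutral_right) auto
  then show ?thesis by simp
qed

lemma unit_phase: "cmod \<zeta> = 1 \<Longrightarrow> \<zeta> * x * cnj (\<zeta> * y) = x * cnj y"
proof -
  assume "cmod \<zeta> = 1"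
  then have "\<zeta> * cnj \<zeta> = 1" by (metis complex_norm_square of_real_1 power_one)
  then show ?thesis by (simp add: algebra_simps)
qed

lemma spectral_exists:
  assumes a: "a \<in> qbasis n d" and b: "b \<in> qbasis n d" and ab: "a \<noteq> b"
    and pp: "inner n d p p = 2 + 2 * of_real c" and mm: "inner n d m m = 2 - 2 * of_real c"
    and pm: "inner n d p m = 0" and c0: "0 \<le> c" and c1: "c \<le> 1"
    and rho: "\<And>j k. j \<in> qbasis n d \<Longrightarrow> k \<in> qbasis n d \<Longrightarrow> \<rho> j k = (p j * cnj (p k) + m j * cnj (m k)) / 4"
  shows "\<exists>e lam. spectral_decomp n d \<rho> e lam"
proof -
  define r1 where "r1 = 1 / sqrt (2 + 2 * c)"
  define u where "u = (\<lambda>j. of_real r1 * p j)"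
  have sp: "sqrt (2 + 2 * c) ^ 2 = 2 + 2 * c" using c0 by simp
  have r: "r1 * r1 * (2 + 2 * c) = 1"
    using c0 sp unfolding r1_def by (simp add: power2_eq_square)
  have u: "inner n d u u = 1" unfolding u_def inner_scale_left inner_scale_right pp
  proof -
    have "cnj (complex_of_real r1) * (complex_of_real r1 * (2 + 2 * complex_of_real c))
      = of_real (r1 * r1 * (2 + 2 * c))" by simp
    then show "cnj (complex_of_real r1) * (complex_of_real r1 * (2 + 2 * complex_of_real c)) = 1"
      unfolding r by simp
  qed
  have uu: "u j * cnj (u k) = p j * cnj (p k) / (2 + 2 * of_real c)" for j k
  proof -
    have "u j * cnj (u k) = of_real (r1 * r1) * (p j * cnj (p k))"
      unfolding u_def by (simp add: algebra_simps)
    also have "r1 * r1 = 1 / (2 + 2 * c)"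
      using c0 sp unfolding r1_def by (simp add: power2_eq_square)
    finally show ?thesis by simp
  qed
  show ?thesis
  proof (cases "c = 1")
    case True
    have m0: "m j = 0" if "j \<in> qbasis n d" for j using inner_self_zero[of n d m j] mm True that by simp
    obtain e \<zeta> where e: "orthonormal n d e" "cmod \<zeta> = 1" "\<forall>j\<in>qbasis n d. e a j = \<zeta> * u j"
      using onb1[OF a u] by blast
    define lam :: "nat list \<Rightarrow> real" where "lam = (\<lambda>i. if i = a then 1 else 0)"
    have "spectral_decomp n d \<rho> e lam"
      unfolding spectral_decomp_def
    proof (intro conjI ballI)
      show "\<And>i i'. i \<in> qbasis n d \<Longrightarrow> i' \<in> qbasis n d \<Longrightarrow> inner n d (e i) (e i') = (if i = i' then 1 else 0)"
        using e(1) unfolding orthonormal_def by blast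
      fix j k assume j: "j \<in> qbasis n d" and k: "k \<in> qbasis n d"
      have "(\<Sum>i\<in>qbasis n d. complex_of_real (lam i) * e i j * cnj (e i k)) = e a j * cnj (e a k)"
        by (subst sum_one[OF a]) (simp_all add: lam_def)
      also have "\<dots> = u j * cnj (u k)" using e(2,3) j k unit_phase by simp
      also have "\<dots> = \<rho> j k" unfolding uu rho[OF j k] using m0 j k True by simp
      finally show "\<rho> j k = (\<Sum>i\<in>qbasis n d. complex_of_real (lam i) * e i j * cnj (e i k))" by simp
    qed
    then show ?thesis by blast
  next
    case False
    define r2 where "r2 = 1 / sqrt (2 - 2 * c)"
    define w where "w = (\<lambda>j. of_real r2 * m j)"
    have sm: "sqrt (2 - 2 * c) ^ 2 = 2 - 2 * c" using c1 by simp
    have c1': "c < 1" using c1 False by simp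
    have r: "r2 * r2 * (2 - 2 * c) = 1"
      using c1' sm unfolding r2_def by (simp add: power2_eq_square)
    have w: "inner n d w w = 1" unfolding w_def inner_scale_left inner_scale_right mm
    proof -
      have "cnj (complex_of_real r2) * (complex_of_real r2 * (2 - 2 * complex_of_real c))
        = of_real (r2 * r2 * (2 - 2 * c))" by simp
      then show "cnj (complex_of_real r2) * (complex_of_real r2 * (2 - 2 * complex_of_real c)) = 1"
        unfolding r by simp
    qed
    have ww: "w j * cnj (w k) = m j * cnj (m k) / (2 - 2 * of_real c)" for j k
    proof -
      have "w j * cnj (w k) = of_real (r2 * r2) * (m j * cnj (m k))"
        unfolding w_def by (simp add: algebra_simps)
      also have "r2 * r2 = 1 / (2 - 2 * c)"
        using c1' sm unfolding r2_def by (simp add: power2_eq_square)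
      finally show ?thesis by simp
    qed
    have uw: "inner n d u w = 0" unfolding u_def w_def inner_scale_left inner_scale_right pm by simp
    obtain e \<zeta>1 \<zeta>2 where e: "orthonormal n d e" "cmod \<zeta>1 = 1" "cmod \<zeta>2 = 1"
      "\<forall>j\<in>qbasis n d. e a j = \<zeta>1 * u j" "\<forall>j\<in>qbasis n d. e b j = \<zeta>2 * w j"
      using onb2[OF a b ab u w uw] by blast
    define lam :: "nat list \<Rightarrow> real" where "lam = (\<lambda>i. if i = a then (1 + c) / 2 else if i = b then (1 - c) / 2 else 0)"
    have "spectral_decomp n d \<rho> e lam"
      unfolding spectral_decomp_def
    proof (intro conjI ballI)
      show "\<And>i i'. i \<in> qbasis n d \<Longrightarrow> i' \<in> qbasis n d \<Longrightarrow> inner n d (e i) (e i') = (if i = i' then 1 else 0)"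
        using e(1) unfolding orthonormal_def by blast
      fix j k assume j: "j \<in> qbasis n d" and k: "k \<in> qbasis n d"
      have "(\<Sum>i\<in>qbasis n d. complex_of_real (lam i) * e i j * cnj (e i k))
          = of_real ((1 + c) / 2) * e a j * cnj (e a k) + of_real ((1 - c) / 2) * e b j * cnj (e b k)"
        by (subst sum_two[OF a b ab]) (simp_all add: lam_def ab[symmetric])
      also have "\<dots> = of_real ((1 + c) / 2) * (u j * cnj (u k)) + of_real ((1 - c) / 2) * (w j * cnj (w k))"
      proof -
        have ea: "e a j * cnj (e a k) = u j * cnj (u k)" using e(4) j k unit_phase[OF e(2), of "u j" "u k"] by simp
        have eb: "e b j * cnj (e b k) = w j * cnj (w k)" using e(5) j k unit_phase[OF e(3), of "w j" "w k"] by simp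
        show ?thesis using ea eb by (simp add: mult.assoc)
      qed
      also have "\<dots> = \<rho> j k"
      proof -
        have nz1: "1 + complex_of_real c \<noteq> 0" using c0
          by (metis add_nonneg_eq_0_iff of_real_1 of_real_add of_real_eq_0_iff zero_le_one one_neq_zero)
        have nz2: "1 - complex_of_real c \<noteq> 0" using c1'
          by (metis eq_iff_diff_eq_0 of_real_1 of_real_eq_iff order_less_irrefl)
        have t1: "complex_of_real ((1 + c) / 2) * (p j * cnj (p k) / (2 + 2 * complex_of_real c)) = p j * cnj (p k) / 4"
        proof -
          have h4: "4 + complex_of_real c * 4 = 4 * (1 + complex_of_real c)" "2 + complex_of_real c * 2 = 2 * (1 + complex_of_real c)"
            by (simp_all add: algebra_simps)
          have "4 + complex_of_real c * 4 \<noteq> 0" "2 + complex_of_real c * 2 \<noteq> 0" unfolding h4 mult_eq_0_iff using nz1 by simp_all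
          then show ?thesis by (simp add: field_simps)
        qed
        have t2: "complex_of_real ((1 - c) / 2) * (m j * cnj (m k) / (2 - 2 * complex_of_real c)) = m j * cnj (m k) / 4"
        proof -
          have h4: "4 - complex_of_real c * 4 = 4 * (1 - complex_of_real c)" "2 - complex_of_real c * 2 = 2 * (1 - complex_of_real c)"
            by (simp_all add: algebra_simps)
          have "4 - complex_of_real c * 4 \<noteq> 0" "2 - complex_of_real c * 2 \<noteq> 0" unfolding h4 mult_eq_0_iff using nz2 by simp_all
          then show ?thesis by (simp add: field_simps)
        qed
        show ?thesis unfolding uu ww rho[OF j k] t1 t2 by (simp add: add_divide_distrib)
      qed
      finally show "\<rho> j k = (\<Sum>i\<in>qbasis n d. complex_of_real (lam i) * e i j * cnj (e i k))" by simp
    qed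
    then show ?thesis by blast
  qed
qed



lemma interp2:
  fixes a b \<alpha> :: real
  assumes a: "a > 0" and b: "b \<ge> 0"
  shows "\<exists>r1 r2. \<forall>x\<in>{0, a, b}. x powr \<alpha> = r1 * x + r2 * x^2"
proof (cases "a = b")
  case True
  show ?thesis
    by (rule exI[of _ "a powr \<alpha> / a"], rule exI[of _ 0]) (use a True in auto)
next
  case False
  define fa where "fa = a powr \<alpha> / a"
  define fb where "fb = b powr \<alpha> / b"
  define r2 where "r2 = (fa - fb) / (a - b)"
  define r1 where "r1 = fa - r2 * a"
  have "a powr \<alpha> = r1 * a + r2 * a^2" unfolding r1_def fa_def using a by (simp add: field_simps power2_eq_square)
  moreover have "b powr \<alpha> = r1 * b + r2 * b^2"
  proof (cases "b = 0")
    case True then show ?thesis by simp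
  next
    case bF: False
    have "r1 * b + r2 * b^2 = b * fa - r2 * b * (a - b)" unfolding r1_def by (simp add: algebra_simps power2_eq_square)
    also have "r2 * b * (a - b) = b * (fa - fb)" unfolding r2_def using False by (simp add: field_simps)
    finally show ?thesis unfolding fb_def using bF b by (simp add: field_simps)
  qed
  ultimately show ?thesis by (intro exI[of _ r1] exI[of _ r2]) auto
qed

lemma three_values:
  fixes l :: "'i \<Rightarrow> real" and a b \<alpha> :: real
  assumes fin: "finite I" and vals: "\<forall>i\<in>I. l i \<in> {0, a, b}"
    and s1: "(\<Sum>i\<in>I. l i) = a + b" and s2: "(\<Sum>i\<in>I. (l i)^2) = a^2 + b^2"
    and a: "a > 0" and b: "b \<ge> 0"
  shows "(\<Sum>i\<in>I. l i powr \<alpha>) = a powr \<alpha> + b powr \<alpha>"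
proof -
  obtain r1 r2 where r: "\<forall>x\<in>{0, a, b}. x powr \<alpha> = r1 * x + r2 * x^2" using interp2[OF a b] by blast
  have "(\<Sum>i\<in>I. l i powr \<alpha>) = (\<Sum>i\<in>I. r1 * l i + r2 * (l i)^2)"
    using vals r by (intro sum.cong) auto
  also have "\<dots> = r1 * (a + b) + r2 * (a^2 + b^2)"
    by (simp add: sum.distrib sum_distrib_left[symmetric] s1 s2)
  also have "\<dots> = (r1 * a + r2 * a^2) + (r1 * b + r2 * b^2)" by (simp add: algebra_simps)
  also have "\<dots> = a powr \<alpha> + b powr \<alpha>" using r by simp
  finally show ?thesis .
qed



lemma spectral_unique_vals:
  assumes pp: "inner n d p p = 2 + 2 * of_real c" and mm: "inner n d m m = 2 - 2 * of_real c"
    and pm: "inner n d p m = 0" and mp: "inner n d m p = 0"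
    and rho: "\<And>j k. j \<in> qbasis n d \<Longrightarrow> k \<in> qbasis n d \<Longrightarrow> \<rho> j k = (p j * cnj (p k) + m j * cnj (m k)) / 4"
    and sd: "spectral_decomp n d \<rho> e lam"
  shows "\<forall>i\<in>qbasis n d. lam i \<in> {0, (1 + c) / 2, (1 - c) / 2}"
    "(\<Sum>i\<in>qbasis n d. lam i) = (1 + c) / 2 + (1 - c) / 2"
    "(\<Sum>i\<in>qbasis n d. (lam i)^2) = ((1 + c) / 2)^2 + ((1 - c) / 2)^2"
proof -
  let ?Q = "qbasis n d"
  have on: "\<And>i i'. i \<in> ?Q \<Longrightarrow> i' \<in> ?Q \<Longrightarrow> inner n d (e i) (e i') = (if i = i' then 1 else 0)"
    and dec: "\<And>j k. j \<in> ?Q \<Longrightarrow> k \<in> ?Q \<Longrightarrow> \<rho> j k = (\<Sum>i\<in>?Q. complex_of_real (lam i) * e i j * cnj (e i k))"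
    using sd unfolding spectral_decomp_def by auto
  have E: "(\<Sum>k\<in>?Q. \<rho> j k * e i k) = of_real (lam i) * e i j" if i: "i \<in> ?Q" and j: "j \<in> ?Q" for i j
  proof -
    have "(\<Sum>k\<in>?Q. \<rho> j k * e i k) = (\<Sum>k\<in>?Q. \<Sum>i'\<in>?Q. of_real (lam i') * e i' j * (cnj (e i' k) * e i k))"
      using j dec by (simp add: sum_distrib_right mult.assoc)
    also have "\<dots> = (\<Sum>i'\<in>?Q. of_real (lam i') * e i' j * inner n d (e i') (e i))"
      unfolding inner_def by (subst sum.swap) (simp add: sum_distrib_left)
    also have "\<dots> = (\<Sum>i'\<in>?Q. if i' = i then of_real (lam i') * e i' j else 0)"
      using on i by (intro sum.cong) auto
    also have "\<dots> = of_real (lam i) * e i j" using i finite_qbasis by simp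
    finally show ?thesis .
  qed
  have R: "(\<Sum>k\<in>?Q. \<rho> j k * x k) = (p j * inner n d p x + m j * inner n d m x) / 4" if j: "j \<in> ?Q" for j x
  proof -
    have "(\<Sum>k\<in>?Q. \<rho> j k * x k) = (\<Sum>k\<in>?Q. (p j * (cnj (p k) * x k) + m j * (cnj (m k) * x k)) / 4)"
      using j rho by (intro sum.cong) (auto simp: algebra_simps)
    also have "\<dots> = (p j * inner n d p x + m j * inner n d m x) / 4"
      unfolding inner_def by (simp add: sum_divide_distrib[symmetric] sum.distrib sum_distrib_left)
    finally show ?thesis .
  qed
  have innR: "inner n d q (\<lambda>j. (p j * x + m j * y) / 4) = (inner n d q p * x + inner n d q m * y) / 4" for q x y
  proof -
    have eq: "(\<lambda>j. (p j * x + m j * y) / 4) = (\<lambda>j. (x / 4) * p j + (y / 4) * m j)" by (auto simp: field_simps)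
    show ?thesis unfolding eq inner_add_right inner_scale_right by (simp add: field_simps)
  qed
  have X: "(of_real (lam i) - of_real ((1 + c) / 2)) * inner n d p (e i) = 0"
          "(of_real (lam i) - of_real ((1 - c) / 2)) * inner n d m (e i) = 0" if i: "i \<in> ?Q" for i
  proof -
    define v where "v = (\<lambda>j. \<Sum>k\<in>?Q. \<rho> j k * e i k)"
    have v1: "inner n d q v = of_real (lam i) * inner n d q (e i)" for q
    proof -
      have "inner n d q v = inner n d q (\<lambda>j. of_real (lam i) * e i j)"
        unfolding v_def using E[OF i] by (intro inner_cong) auto
      then show ?thesis by (simp add: inner_scale_right)
    qed
    have v2: "inner n d q v = (inner n d q p * inner n d p (e i) + inner n d q m * inner n d m (e i)) / 4" for q
    proof -
      have "inner n d q v = inner n d q (\<lambda>j. (p j * inner n d p (e i) + m j * inner n d m (e i)) / 4)"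
        unfolding v_def using R by (intro inner_cong) auto
      then show ?thesis by (simp add: innR)
    qed
    show "(of_real (lam i) - of_real ((1 + c) / 2)) * inner n d p (e i) = 0"
      using v1[of p] v2[of p] pp pm by (simp add: algebra_simps add_divide_distrib)
    show "(of_real (lam i) - of_real ((1 - c) / 2)) * inner n d m (e i) = 0"
      using v1[of m] v2[of m] mm mp by (simp add: algebra_simps diff_divide_distrib)
  qed
  show "\<forall>i\<in>?Q. lam i \<in> {0, (1 + c) / 2, (1 - c) / 2}"
  proof
    fix i assume i: "i \<in> ?Q"
    show "lam i \<in> {0, (1 + c) / 2, (1 - c) / 2}"
    proof (rule ccontr)
      assume nin: "lam i \<notin> {0, (1 + c) / 2, (1 - c) / 2}"
      have x0: "inner n d p (e i) = 0" using X(1)[OF i] nin by (auto simp del: of_real_divide)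
      have y0: "inner n d m (e i) = 0" using X(2)[OF i] nin by (auto simp del: of_real_divide)
      have "of_real (lam i) * e i j = 0" if j: "j \<in> ?Q" for j
        using E[OF i j] R[OF j, of "e i"] x0 y0 by simp
      then have "inner n d (e i) (\<lambda>j. of_real (lam i) * e i j) = inner n d (e i) (\<lambda>j. 0)"
        by (intro inner_cong) auto
      then have "of_real (lam i) * inner n d (e i) (e i) = 0"
        by (simp add: inner_scale_right inner_def)
      then have "lam i = 0" using on[OF i i] by simp
      then show False using nin by simp
    qed
  qed
  have "(\<Sum>j\<in>?Q. \<rho> j j) = (\<Sum>j\<in>?Q. \<Sum>i\<in>?Q. of_real (lam i) * (cnj (e i j) * e i j))"
    using dec by (intro sum.cong) (auto simp: algebra_simps)
  also have "\<dots> = (\<Sum>i\<in>?Q. of_real (lam i) * inner n d (e i) (e i))"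
    unfolding inner_def by (subst sum.swap) (simp add: sum_distrib_left)
  also have "\<dots> = (\<Sum>i\<in>?Q. of_real (lam i))" using on by (intro sum.cong) auto
  finally have tr1: "(\<Sum>j\<in>?Q. \<rho> j j) = of_real (\<Sum>i\<in>?Q. lam i)" by simp
  have "(\<Sum>j\<in>?Q. \<rho> j j) = (\<Sum>j\<in>?Q. (cnj (p j) * p j + cnj (m j) * m j) / 4)"
    using rho by (intro sum.cong) (auto simp: algebra_simps)
  also have "\<dots> = (inner n d p p + inner n d m m) / 4"
    unfolding inner_def by (simp add: sum_divide_distrib[symmetric] sum.distrib)
  also have "\<dots> = 1" unfolding pp mm by simp
  finally have "of_real (\<Sum>i\<in>?Q. lam i) = (1::complex)" using tr1 by simp
  then have "(\<Sum>i\<in>?Q. lam i) = 1" by (metis of_real_eq_1_iff)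
  then show "(\<Sum>i\<in>?Q. lam i) = (1 + c) / 2 + (1 - c) / 2" by (simp add: add_divide_distrib[symmetric])
  define T where "T = (\<Sum>j\<in>?Q. \<Sum>k\<in>?Q. \<rho> j k * \<rho> k j)"
  have "T = (\<Sum>j\<in>?Q. \<Sum>i\<in>?Q. of_real (lam i) * cnj (e i j) * (\<Sum>k\<in>?Q. \<rho> j k * e i k))"
  proof (unfold T_def, rule sum.cong[OF refl])
    fix j assume j: "j \<in> ?Q"
    have "(\<Sum>k\<in>?Q. \<rho> j k * \<rho> k j) = (\<Sum>k\<in>?Q. \<Sum>i\<in>?Q. of_real (lam i) * cnj (e i j) * (\<rho> j k * e i k))"
    proof (intro sum.cong refl)
      fix k assume k: "k \<in> ?Q"
      show "\<rho> j k * \<rho> k j = (\<Sum>i\<in>?Q. of_real (lam i) * cnj (e i j) * (\<rho> j k * e i k))"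
        by (simp only: dec[OF k j]) (simp add: sum_distrib_left algebra_simps)
    qed
    also have "\<dots> = (\<Sum>i\<in>?Q. of_real (lam i) * cnj (e i j) * (\<Sum>k\<in>?Q. \<rho> j k * e i k))"
      by (subst sum.swap) (simp add: sum_distrib_left)
    finally show "(\<Sum>k\<in>?Q. \<rho> j k * \<rho> k j) = (\<Sum>i\<in>?Q. of_real (lam i) * cnj (e i j) * (\<Sum>k\<in>?Q. \<rho> j k * e i k))" .
  qed
  also have "\<dots> = (\<Sum>j\<in>?Q. \<Sum>i\<in>?Q. of_real ((lam i)^2) * (cnj (e i j) * e i j))"
    using E by (intro sum.cong refl) (simp add: power2_eq_square algebra_simps)
  also have "\<dots> = (\<Sum>i\<in>?Q. of_real ((lam i)^2) * inner n d (e i) (e i))"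
    unfolding inner_def by (subst sum.swap) (simp add: sum_distrib_left)
  also have "\<dots> = (\<Sum>i\<in>?Q. of_real ((lam i)^2))" using on by (intro sum.cong) auto
  finally have T1: "T = of_real (\<Sum>i\<in>?Q. (lam i)^2)" by simp
  have Rp: "(\<Sum>k\<in>?Q. \<rho> j k * p k) = of_real ((1 + c) / 2) * p j" if "j \<in> ?Q" for j
  proof -
    have "(\<Sum>k\<in>?Q. \<rho> j k * p k) = (p j * (2 + 2 * of_real c) + m j * 0) / 4" using R[OF that, of p] unfolding pp mp .
    also have "\<dots> = of_real ((1 + c) / 2) * p j" by (simp add: field_simps)
    finally show ?thesis .
  qed
  have Rm: "(\<Sum>k\<in>?Q. \<rho> j k * m k) = of_real ((1 - c) / 2) * m j" if "j \<in> ?Q" for j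
  proof -
    have "(\<Sum>k\<in>?Q. \<rho> j k * m k) = (p j * 0 + m j * (2 - 2 * of_real c)) / 4" using R[OF that, of m] unfolding mm pm .
    also have "\<dots> = of_real ((1 - c) / 2) * m j" by (simp add: field_simps)
    finally show ?thesis .
  qed
  have "T = (\<Sum>j\<in>?Q. (cnj (p j) * (\<Sum>k\<in>?Q. \<rho> j k * p k) + cnj (m j) * (\<Sum>k\<in>?Q. \<rho> j k * m k)) / 4)"
  proof (unfold T_def, rule sum.cong[OF refl])
    fix j assume j: "j \<in> ?Q"
    have "(\<Sum>k\<in>?Q. \<rho> j k * \<rho> k j) = (\<Sum>k\<in>?Q. (cnj (p j) * (\<rho> j k * p k) + cnj (m j) * (\<rho> j k * m k)) / 4)"
    proof (intro sum.cong refl)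
      fix k assume k: "k \<in> ?Q"
      show "\<rho> j k * \<rho> k j = (cnj (p j) * (\<rho> j k * p k) + cnj (m j) * (\<rho> j k * m k)) / 4"
        by (simp only: rho[OF k j]) (simp add: algebra_simps)
    qed
    also have "\<dots> = (cnj (p j) * (\<Sum>k\<in>?Q. \<rho> j k * p k) + cnj (m j) * (\<Sum>k\<in>?Q. \<rho> j k * m k)) / 4"
      by (simp add: sum_divide_distrib[symmetric] sum.distrib sum_distrib_left)
    finally show "(\<Sum>k\<in>?Q. \<rho> j k * \<rho> k j) = (cnj (p j) * (\<Sum>k\<in>?Q. \<rho> j k * p k) + cnj (m j) * (\<Sum>k\<in>?Q. \<rho> j k * m k)) / 4" .
  qed
  also have "\<dots> = (\<Sum>j\<in>?Q. (of_real ((1 + c) / 2) * (cnj (p j) * p j) + of_real ((1 - c) / 2) * (cnj (m j) * m j)) / 4)"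
  proof (rule sum.cong[OF refl])
    fix j assume j: "j \<in> ?Q"
    show "(cnj (p j) * (\<Sum>k\<in>?Q. \<rho> j k * p k) + cnj (m j) * (\<Sum>k\<in>?Q. \<rho> j k * m k)) / 4 =
      (of_real ((1 + c) / 2) * (cnj (p j) * p j) + of_real ((1 - c) / 2) * (cnj (m j) * m j)) / 4"
      unfolding Rp[OF j] Rm[OF j] by (simp only: mult.left_commute)
  qed
  also have "\<dots> = (of_real ((1 + c) / 2) * inner n d p p + of_real ((1 - c) / 2) * inner n d m m) / 4"
    unfolding inner_def by (simp add: sum_divide_distrib[symmetric] sum.distrib sum_distrib_left)
  also have "\<dots> = of_real (((1 + c) / 2)^2 + ((1 - c) / 2)^2)"
    unfolding pp mm by (simp add: field_simps power2_eq_square)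
  finally show "(\<Sum>i\<in>?Q. (lam i)^2) = ((1 + c) / 2)^2 + ((1 - c) / 2)^2" using T1 by (metis of_real_eq_iff)
qed



lemma two_basis:
  assumes "d \<ge> 2" "n \<ge> 1"
  shows "replicate n 0 \<in> qbasis n d" "(1 # replicate (n - 1) 0) \<in> qbasis n d"
    "replicate n (0::nat) \<noteq> 1 # replicate (n - 1) 0"
proof -
  show "replicate n 0 \<in> qbasis n d" using assms unfolding qbasis_def by auto
  show "(1 # replicate (n - 1) 0) \<in> qbasis n d" using assms unfolding qbasis_def by auto
  obtain k where "n = Suc k" using assms(2) by (cases n) auto
  then show "replicate n (0::nat) \<noteq> 1 # replicate (n - 1) 0" by simp
qed

lemma tr_pow_rho2:
  assumes d: "d \<ge> 2" and n: "n \<ge> 1" and \<psi>: "inner n d \<psi> \<psi> = 1" and \<phi>: "inner n d \<phi> \<phi> = 1"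
  shows "tr_pow n d \<alpha> (rho2 \<psi> \<phi>) = ((1 + cmod (inner n d \<psi> \<phi>)) / 2) powr \<alpha> + ((1 - cmod (inner n d \<psi> \<phi>)) / 2) powr \<alpha>"
proof -
  define c where "c = cmod (inner n d \<psi> \<phi>)"
  define t where "t = tph (inner n d \<psi> \<phi>)"
  define p where "p = (\<lambda>j. \<psi> j + t * \<phi> j)"
  define m where "m = (\<lambda>j. \<psi> j - t * \<phi> j)"
  have ts: "inner n d p p = 2 + 2 * of_real c" "inner n d m m = 2 - 2 * of_real c"
    "inner n d p m = 0" "inner n d m p = 0" "c \<le> 1"
    "\<And>j k. rho2 \<psi> \<phi> j k = (p j * cnj (p k) + m j * cnj (m k)) / 4"
    unfolding p_def m_def t_def c_def by (rule twostate[OF \<psi> \<phi>])+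
  have c0: "0 \<le> c" unfolding c_def by simp
  note bs = two_basis[OF d n]
  have ex: "\<exists>e lam. spectral_decomp n d (rho2 \<psi> \<phi>) e lam"
    by (rule spectral_exists[OF bs ts(1,2,3) c0 ts(5) ts(6)])
  then have "\<exists>s. \<exists>e lam. spectral_decomp n d (rho2 \<psi> \<phi>) e lam \<and> s = (\<Sum>i\<in>qbasis n d. lam i powr \<alpha>)"
    by blast
  from someI_ex[OF this] obtain e lam where sd: "spectral_decomp n d (rho2 \<psi> \<phi>) e lam"
    and tp: "tr_pow n d \<alpha> (rho2 \<psi> \<phi>) = (\<Sum>i\<in>qbasis n d. lam i powr \<alpha>)"
    unfolding tr_pow_def by blast
  note U = spectral_unique_vals[OF ts(1,2,3,4) ts(6) sd]
  have "(\<Sum>i\<in>qbasis n d. lam i powr \<alpha>) = ((1 + c) / 2) powr \<alpha> + ((1 - c) / 2) powr \<alpha>"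
    by (rule three_values[OF finite_qbasis U]) (use c0 ts(5) in auto)
  then show ?thesis unfolding tp c_def .
qed



definition Gf :: "real \<Rightarrow> real \<Rightarrow> real" where
  "Gf \<alpha> x = ((1 + x) / 2) powr \<alpha> + ((1 - x) / 2) powr \<alpha>"

definition Ff :: "real \<Rightarrow> real \<Rightarrow> real \<Rightarrow> real" where
  "Ff \<alpha> \<beta> x = (1 / ((1 - \<alpha>) * \<beta>)) * ((Gf \<alpha> x) powr \<beta> - 1)"

lemma Gf_pos: "0 \<le> x \<Longrightarrow> x \<le> 1 \<Longrightarrow> Gf \<alpha> x > 0"
  unfolding Gf_def by (intro add_pos_nonneg) auto

lemma Gf_deriv:
  assumes "0 < z" "z < 1"
  shows "(Gf \<alpha> has_real_derivative
     (\<alpha> * ((1 + z) / 2) powr (\<alpha> - 1) * (1/2) + \<alpha> * ((1 - z) / 2) powr (\<alpha> - 1) * (- 1/2))) (at z)"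
proof -
  have d1: "((\<lambda>z. ((1 + z) / 2) powr \<alpha>) has_real_derivative \<alpha> * ((1 + z) / 2) powr (\<alpha> - 1) * (1/2)) (at z)"
    by (rule DERIV_chain2[OF has_real_derivative_powr]) (use assms in \<open>auto intro!: derivative_eq_intros\<close>)
  have d2: "((\<lambda>z. ((1 - z) / 2) powr \<alpha>) has_real_derivative \<alpha> * ((1 - z) / 2) powr (\<alpha> - 1) * (- 1/2)) (at z)"
    by (rule DERIV_chain2[OF has_real_derivative_powr]) (use assms in \<open>auto intro!: derivative_eq_intros\<close>)
  show ?thesis unfolding Gf_def[abs_def] by (rule DERIV_add[OF d1 d2])
qed

lemma Gf_cont: assumes "\<alpha> > 0" shows "continuous_on {0..1} (Gf \<alpha>)"
  unfolding Gf_def[abs_def] using assms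
  by (intro continuous_intros continuous_on_powr') auto

lemma Gf_mono:
  assumes a0: "\<alpha> > 0" and xy: "0 \<le> x" "x \<le> y" "y \<le> 1"
  shows "\<alpha> > 1 \<Longrightarrow> Gf \<alpha> x \<le> Gf \<alpha> y" "\<alpha> < 1 \<Longrightarrow> Gf \<alpha> y \<le> Gf \<alpha> x"
proof -
  have cont: "continuous_on {x..y} (Gf \<alpha>)" using Gf_cont[OF a0] by (rule continuous_on_subset) (use xy in auto)
  assume a1: "\<alpha> > 1"
  show "Gf \<alpha> x \<le> Gf \<alpha> y"
  proof (rule DERIV_nonneg_imp_increasing_open[OF xy(2) _ cont])
    fix z assume z: "x < z" "z < y"
    have "((1 - z) / 2) powr (\<alpha> - 1) \<le> ((1 + z) / 2) powr (\<alpha> - 1)"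
      using z xy a1 by (intro powr_mono2) auto
    then have "0 \<le> \<alpha> * (((1 + z) / 2) powr (\<alpha> - 1) - ((1 - z) / 2) powr (\<alpha> - 1))"
      using a0 by simp
    then have D0: "0 \<le> \<alpha> * ((1 + z) / 2) powr (\<alpha> - 1) * (1/2) + \<alpha> * ((1 - z) / 2) powr (\<alpha> - 1) * (- 1/2)"
      by (simp add: algebra_simps)
    then show "\<exists>D. (Gf \<alpha> has_real_derivative D) (at z) \<and> 0 \<le> D"
    proof -
      have zz: "0 < z" "z < 1" using z xy by auto
      show ?thesis using Gf_deriv[OF zz, of \<alpha>] D0 by blast
    qed
  qed
next
  have cont: "continuous_on {x..y} (\<lambda>z. - Gf \<alpha> z)" using Gf_cont[OF a0]
    by (intro continuous_intros) (rule continuous_on_subset, use xy in auto)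
  assume a1: "\<alpha> < 1"
  have "- Gf \<alpha> x \<le> - Gf \<alpha> y"
  proof (rule DERIV_nonneg_imp_increasing_open[OF xy(2) _ cont])
    fix z assume z: "x < z" "z < y"
    have "((1 + z) / 2) powr (\<alpha> - 1) \<le> ((1 - z) / 2) powr (\<alpha> - 1)"
      using z xy a1 by (intro powr_mono2') auto
    then have "0 \<le> \<alpha> * (((1 - z) / 2) powr (\<alpha> - 1) - ((1 + z) / 2) powr (\<alpha> - 1))"
      using a0 by simp
    then have D0: "0 \<le> - (\<alpha> * ((1 + z) / 2) powr (\<alpha> - 1) * (1/2) + \<alpha> * ((1 - z) / 2) powr (\<alpha> - 1) * (- 1/2))"
      by (simp add: algebra_simps)
    then show "\<exists>D. ((\<lambda>z. - Gf \<alpha> z) has_real_derivative D) (at z) \<and> 0 \<le> D"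
    proof -
      have zz: "0 < z" "z < 1" using z xy by auto
      show ?thesis using DERIV_minus[OF Gf_deriv[OF zz, of \<alpha>]] D0 by blast
    qed
  qed
  then show "Gf \<alpha> y \<le> Gf \<alpha> x" by simp
qed

lemma Ff_antimono:
  assumes a0: "\<alpha> > 0" and a1: "\<alpha> \<noteq> 1" and b: "\<beta> \<noteq> 0" and xy: "0 \<le> x" "x \<le> y" "y \<le> 1"
  shows "Ff \<alpha> \<beta> y \<le> Ff \<alpha> \<beta> x"
proof -
  have gx: "Gf \<alpha> x > 0" and gy: "Gf \<alpha> y > 0" using Gf_pos xy by auto
  consider "\<alpha> > 1" "\<beta> > 0" | "\<alpha> > 1" "\<beta> < 0" | "\<alpha> < 1" "\<beta> > 0" | "\<alpha> < 1" "\<beta> < 0"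
    using a1 b by linarith
  then show ?thesis
  proof cases
    case 1
    then have "Gf \<alpha> x powr \<beta> \<le> Gf \<alpha> y powr \<beta>" using Gf_mono(1)[OF a0 xy] gx by (intro powr_mono2) auto
    moreover have "1 / ((1 - \<alpha>) * \<beta>) < 0" using 1 by (simp add: divide_neg_pos mult_neg_pos)
    ultimately show ?thesis unfolding Ff_def by (intro mult_left_mono_neg) auto
  next
    case 2
    then have "Gf \<alpha> y powr \<beta> \<le> Gf \<alpha> x powr \<beta>" using Gf_mono(1)[OF a0 xy] gx by (intro powr_mono2') auto
    moreover have "1 / ((1 - \<alpha>) * \<beta>) > 0" using 2 by (simp add: mult_neg_neg)
    ultimately show ?thesis unfolding Ff_def by (intro mult_left_mono) auto
  next
    case 3
    then have "Gf \<alpha> y powr \<beta> \<le> Gf \<alpha> x powr \<beta>" using Gf_mono(2)[OF a0 xy] gy by (intro powr_mono2) auto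
    moreover have "1 / ((1 - \<alpha>) * \<beta>) > 0" using 3 by simp
    ultimately show ?thesis unfolding Ff_def by (intro mult_left_mono) auto
  next
    case 4
    then have "Gf \<alpha> x powr \<beta> \<le> Gf \<alpha> y powr \<beta>" using Gf_mono(2)[OF a0 xy] gy by (intro powr_mono2') auto
    moreover have "1 / ((1 - \<alpha>) * \<beta>) < 0" using 4 by (simp add: mult_pos_neg)
    ultimately show ?thesis unfolding Ff_def by (intro mult_left_mono_neg) auto
  qed
qed

definition clamp01 :: "real \<Rightarrow> real" where "clamp01 x = max 0 (min 1 x)"

lemma clamp_cont: "continuous_on UNIV clamp01"
  unfolding clamp01_def[abs_def] by (intro continuous_intros)

lemma Ff_clamp_cont:
  assumes a0: "\<alpha> > 0"
  shows "continuous_on UNIV (\<lambda>x. Ff \<alpha> \<beta> (clamp01 x))"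
proof -
  have cr: "clamp01 x \<in> {0..1}" for x unfolding clamp01_def by auto
  have "continuous_on UNIV (\<lambda>x. Gf \<alpha> (clamp01 x))"
    by (rule continuous_on_compose2[OF Gf_cont[OF a0] clamp_cont]) (use cr in auto)
  moreover have gp: "Gf \<alpha> (clamp01 x) \<noteq> 0" "0 \<le> Gf \<alpha> (clamp01 x)" for x
    using Gf_pos[of "clamp01 x" \<alpha>] cr[of x] by auto
  ultimately show ?thesis unfolding Ff_def
    by (intro continuous_intros continuous_on_powr') (auto simp: gp)
qed



lemma adj_idop: "adj idop = idop"
  unfolding adj_def idop_def by (auto intro!: ext)

lemma mmul_idop_left: "j \<in> qbasis n d \<Longrightarrow> mmul n d idop A j k = A j k"
  unfolding mmul_def by (rule sum_idop_left)

lemma mmul_idop_right: "k \<in> qbasis n d \<Longrightarrow> mmul n d A idop j k = A j k"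
  unfolding mmul_def by (rule sum_idop_right)

lemma clifford_idop: "clifford n d idop"
  unfolding clifford_def unitary_op_def adj_idop
proof (intro conjI ballI)
  fix j k assume j: "j \<in> qbasis n d" and k: "k \<in> qbasis n d"
  show "mmul n d idop idop j k = idop j k" "mmul n d idop idop j k = idop j k"
    using mmul_idop_left[OF j] by auto
next
  fix u assume u: "u \<in> hw_index n d"
  show "\<exists>u'\<in>hw_index n d. \<exists>\<theta>. \<forall>j\<in>qbasis n d. \<forall>k\<in>qbasis n d.
          mmul n d (mmul n d idop (hw d u)) idop j k = cis \<theta> * hw d u' j k"
    by (rule bexI[OF _ u], rule exI[of _ 0]) (simp add: mmul_idop_left mmul_idop_right)
qed

lemma zero_in_qbasis: "d \<ge> 1 \<Longrightarrow> replicate n 0 \<in> qbasis n d"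
  unfolding qbasis_def by auto

lemma stab_nonempty: "d \<ge> 1 \<Longrightarrow> stab_states n d \<noteq> {}"
  unfolding stab_states_def using clifford_idop by blast

lemma stab_norm:
  assumes d: "d \<ge> 1" and \<phi>: "\<phi> \<in> stab_states n d"
  shows "inner n d \<phi> \<phi> = 1"
proof -
  obtain V where V: "clifford n d V" and \<phi>V: "\<phi> = (\<lambda>j. V j (replicate n 0))"
    using \<phi> unfolding stab_states_def by blast
  have z: "replicate n 0 \<in> qbasis n d" using zero_in_qbasis[OF d] .
  have "mmul n d (adj V) V (replicate n 0) (replicate n 0) = idop (replicate n 0) (replicate n 0)"
    using V z unfolding clifford_def unitary_op_def by blast
  then show ?thesis unfolding \<phi>V inner_def mmul_def adj_def idop_def by simp
qed

lemma proj_rho2: "proj \<psi> = rho2 \<psi> \<psi>"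
  unfolding rho2_def by (auto intro!: ext)

lemma S_pure:
  assumes d: "d \<ge> 2" and n: "n \<ge> 1" and \<psi>: "inner n d \<psi> \<psi> = 1"
  shows "S_ab n d \<alpha> \<beta> (proj \<psi>) = 0"
proof -
  have "tr_pow n d \<alpha> (proj \<psi>) = 1"
    unfolding proj_rho2 tr_pow_rho2[OF d n \<psi> \<psi>] \<psi> by simp
  then show ?thesis unfolding S_ab_def by simp
qed

lemma J_eq:
  assumes d: "d \<ge> 2" and n: "n \<ge> 1" and \<psi>: "inner n d \<psi> \<psi> = 1" and \<phi>: "inner n d \<phi> \<phi> = 1"
  shows "J_ab n d \<alpha> \<beta> (proj \<psi>) (proj \<phi>) = Ff \<alpha> \<beta> (cmod (inner n d \<psi> \<phi>))"
proof -
  have "J_ab n d \<alpha> \<beta> (proj \<psi>) (proj \<phi>) = S_ab n d \<alpha> \<beta> (rho2 \<psi> \<phi>)"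
    unfolding J_ab_def S_pure[OF d n \<psi>] S_pure[OF d n \<phi>] rho2_def by simp
  also have "\<dots> = Ff \<alpha> \<beta> (cmod (inner n d \<psi> \<phi>))"
    unfolding S_ab_def tr_pow_rho2[OF d n \<psi> \<phi>] Ff_def Gf_def ..
  finally show ?thesis .
qed

theorem proposition2:
  fixes n d :: nat and \<psi> :: "nat list \<Rightarrow> complex" and \<alpha> \<beta> :: real
  assumes "d \<ge> 2" and "n \<ge> 1"
    and "(\<Sum>j\<in>qbasis n d. (cmod (\<psi> j))^2) = 1"
    and "\<alpha> > 0" and "\<alpha> \<noteq> 1" and "\<beta> \<noteq> 0"
  shows "M_ab n d \<alpha> \<beta> \<psi> =
    (1 / ((1 - \<alpha>) * \<beta>)) *
      ((((1 + c_abs n d \<psi>) / 2) powr \<alpha> + ((1 - c_abs n d \<psi>) / 2) powr \<alpha>) powr \<beta> - 1)"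
proof -
  note d = assms(1) and n = assms(2) and a0 = assms(4) and a1 = assms(5) and b = assms(6)
  have \<psi>: "inner n d \<psi> \<psi> = 1" unfolding inner_self_real assms(3) by simp
  have d1: "d \<ge> 1" using d by simp
  define C where "C = (\<lambda>\<phi>. cmod (inner n d \<psi> \<phi>)) ` stab_states n d"
  define F where "F = (\<lambda>x. Ff \<alpha> \<beta> (clamp01 x))"
  have C01: "0 \<le> x \<and> x \<le> 1" if xC: "x \<in> C" for x
  proof -
    obtain \<phi> where \<phi>: "\<phi> \<in> stab_states n d" and x: "x = cmod (inner n d \<psi> \<phi>)" using xC unfolding C_def by blast
    show ?thesis using twostate(5)[OF \<psi> stab_norm[OF d1 \<phi>]] x by simp
  qed
  have Cne: "C \<noteq> {}" unfolding C_def using stab_nonempty[OF d1] by simp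
  have Cbdd: "bdd_above C" using C01 by (intro bdd_aboveI[of _ 1]) auto
  have supC: "0 \<le> Sup C" "Sup C \<le> 1"
  proof -
    obtain x where "x \<in> C" using Cne by blast
    then show "0 \<le> Sup C" using C01 cSup_upper[OF _ Cbdd] by (meson order_trans)
    show "Sup C \<le> 1" using C01 Cne by (intro cSup_least) auto
  qed
  have clampC: "clamp01 x = x" if "0 \<le> x" "x \<le> 1" for x using that unfolding clamp01_def by simp
  have M: "M_ab n d \<alpha> \<beta> \<psi> = Inf (F ` C)"
  proof -
    have "M_ab n d \<alpha> \<beta> \<psi> = Inf ((\<lambda>\<phi>. F (cmod (inner n d \<psi> \<phi>))) ` stab_states n d)"
      unfolding M_ab_def
    proof (rule arg_cong[of _ _ Inf], rule image_cong[OF refl])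
      fix \<phi> assume \<phi>: "\<phi> \<in> stab_states n d"
      have "cmod (inner n d \<psi> \<phi>) \<in> C" unfolding C_def using \<phi> by blast
      then show "J_ab n d \<alpha> \<beta> (proj \<psi>) (proj \<phi>) = F (cmod (inner n d \<psi> \<phi>))"
        unfolding J_eq[OF d n \<psi> stab_norm[OF d1 \<phi>]] F_def using C01 clampC by simp
    qed
    then show ?thesis unfolding C_def image_image .
  qed
  have am: "antimono F"
  proof (rule antimonoI)
    fix x y :: real assume "x \<le> y"
    then have "clamp01 x \<le> clamp01 y" unfolding clamp01_def by simp
    moreover have "0 \<le> clamp01 x" "clamp01 y \<le> 1" unfolding clamp01_def by auto
    ultimately show "F y \<le> F x" unfolding F_def by (intro Ff_antimono[OF a0 a1 b]) auto
  qed
  have cont: "continuous (at_left (Sup C)) F"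
  proof -
    have "isCont F (Sup C)" using Ff_clamp_cont[OF a0, of \<beta>] unfolding F_def
      by (simp add: continuous_on_eq_continuous_at)
    then show ?thesis by (rule continuous_at_imp_continuous_at_within)
  qed
  have "F (Sup C) = Inf (F ` C)" using continuous_at_Sup_antimono[OF am cont Cne Cbdd] by simp
  moreover have "F (Sup C) = Ff \<alpha> \<beta> (Sup C)" unfolding F_def using clampC supC by simp
  moreover have "c_abs n d \<psi> = Sup C" unfolding c_abs_def C_def ..
  ultimately show ?thesis unfolding M Ff_def Gf_def by simp
qed

end
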